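(* Let $\mathcal L$ be a finite lattice and $C\subseteq\bar{\mathcal L}$ a crosscut. Let $\bar{\mathcal L}_C$ be the set of elements of $\bar{\mathcal L}$ that are either the join of a nonempty subset of $C$ or the meet of a nonempty subset of $C$, with the induced order. Then $\Delta(\bar{\mathcal L})$ collapses onto $\Delta(\bar{\mathcal L}_C)$.
   Context: For a finite lattice $\mathcal L$ with minimum $\hat0$ and maximum $\hat1$, $\bar{\mathcal L}=\mathcal L\setminus\{\hat0,\hat1\}$. A crosscut is a subset $C\subseteq\bar{\mathcal L}$ that is an antichain and such that for every chain $\gamma$ of $\mathcal L$ there exists $x\in C$ with $\gamma\cup\{x\}$ a chain. $\Delta(Q)$ denotes the order complex of a poset $Q$ (simplices = nonempty chains). *)

theory Defs
  imports Main
begin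

definition is_chain :: "'a::order set \<Rightarrow> bool" where
  "is_chain S \<longleftrightarrow> (\<forall>x\<in>S. \<forall>y\<in>S. x \<le> y \<or> y \<le> x)"

definition is_antichain :: "'a::order set \<Rightarrow> bool" where
  "is_antichain S \<longleftrightarrow> (\<forall>x\<in>S. \<forall>y\<in>S. x \<le> y \<longrightarrow> x = y)"

definition proper_part :: "'a::bounded_lattice set" where
  "proper_part = UNIV - {bot, top}"

definition is_crosscut :: "'a::bounded_lattice set \<Rightarrow> bool" where
  "is_crosscut C \<longleftrightarrow> C \<subseteq> proper_part \<and> is_antichain C \<and>
     (\<forall>\<gamma>::'a set. is_chain \<gamma> \<longrightarrow> (\<exists>x\<in>C. is_chain (insert x \<gamma>)))"

definition crosscut_part :: "'a::bounded_lattice set \<Rightarrow> 'a set" where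
  "crosscut_part C = {x \<in> proper_part.
     (\<exists>D. D \<subseteq> C \<and> D \<noteq> {} \<and> x = Sup_fin D) \<or>
     (\<exists>D. D \<subseteq> C \<and> D \<noteq> {} \<and> x = Inf_fin D)}"

definition order_complex :: "'a::order set \<Rightarrow> 'a set set" where
  "order_complex S = {c. c \<noteq> {} \<and> finite c \<and> c \<subseteq> S \<and> is_chain c}"

definition elementary_collapse :: "'a set set \<Rightarrow> 'a set set \<Rightarrow> bool" where
  "elementary_collapse K K' \<longleftrightarrow>
     (\<exists>\<sigma> \<tau>. \<sigma> \<in> K \<and> \<tau> \<in> K \<and> \<sigma> \<subset> \<tau> \<and> card \<tau> = card \<sigma> + 1 \<and>
        (\<forall>\<rho>\<in>K. \<sigma> \<subset> \<rho> \<longrightarrow> \<rho> = \<tau>) \<and> K' = K - {\<sigma>, \<tau>})"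

definition collapses_onto :: "'a set set \<Rightarrow> 'a set set \<Rightarrow> bool" where
  "collapses_onto K K' \<longleftrightarrow> elementary_collapse\<^sup>*\<^sup>* K K'"

end

theory Submission
  imports Defs
begin

lemma collapse_cone:
  fixes K :: "'a set set"
  assumes fin: "finite K" and finel: "\<forall>\<sigma>\<in>K. finite \<sigma>" and xy: "x \<noteq> y"
  and h1: "\<And>\<sigma>. \<sigma>\<in>K \<Longrightarrow> x\<in>\<sigma> \<Longrightarrow> y\<notin>\<sigma> \<Longrightarrow> insert y \<sigma> \<in> K"
  and h2: "\<And>\<rho>. \<rho>\<in>K \<Longrightarrow> x\<in>\<rho> \<Longrightarrow> y\<in>\<rho> \<Longrightarrow> \<rho> - {y} \<in> K"
  shows "elementary_collapse\<^sup>*\<^sup>* K {\<sigma>\<in>K. x\<notin>\<sigma>}"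
proof -
  define A where "A = {\<sigma>\<in>K. x\<in>\<sigma> \<and> y\<notin>\<sigma>}"
  have finA: "finite A" using fin by (simp add: A_def)
  have main: "B \<subseteq> A \<longrightarrow> (\<forall>\<sigma>\<in>B. \<forall>\<tau>\<in>A. \<sigma> \<subseteq> \<tau> \<longrightarrow> \<tau> \<in> B) \<longrightarrow>
      elementary_collapse\<^sup>*\<^sup>* K (K - (B \<union> insert y ` B))" if fB: "finite B" for B
    using fB
  proof (induction B rule: finite_remove_induct)
    case empty
    then show ?case by simp
  next
    case (remove B)
    show ?case
    proof (intro impI)
      assume BA: "B \<subseteq> A" and up: "\<forall>\<sigma>\<in>B. \<forall>\<tau>\<in>A. \<sigma> \<subseteq> \<tau> \<longrightarrow> \<tau> \<in> B"
      obtain \<sigma> where s: "\<sigma> \<in> B" and smin: "\<And>\<tau>. \<tau> \<in> B \<Longrightarrow> card \<sigma> \<le> card \<tau>"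
        using ex_has_least_nat[of "\<lambda>s. s \<in> B" _ card] remove.hyps(2) by blast
      define B' where "B' = B - {\<sigma>}"
      have B'A: "B' \<subseteq> A" using BA by (auto simp: B'_def)
      have sA: "\<sigma> \<in> A" using s BA by auto
      have sK: "\<sigma> \<in> K" "x \<in> \<sigma>" "y \<notin> \<sigma>" using sA by (auto simp: A_def)
      have fs: "finite \<sigma>" using finel sK by auto
      have up': "\<forall>\<sigma>'\<in>B'. \<forall>\<tau>\<in>A. \<sigma>' \<subseteq> \<tau> \<longrightarrow> \<tau> \<in> B'"
      proof (intro ballI impI)
        fix \<sigma>' \<tau> assume a: "\<sigma>' \<in> B'" "\<tau> \<in> A" "\<sigma>' \<subseteq> \<tau>"
        then have tB: "\<tau> \<in> B" using up by (auto simp: B'_def)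
        show "\<tau> \<in> B'"
        proof (rule ccontr)
          assume "\<tau> \<notin> B'"
          then have "\<tau> = \<sigma>" using tB by (auto simp: B'_def)
          then have ss: "\<sigma>' \<subseteq> \<sigma>" using a(3) by simp
          have cc: "card \<sigma> \<le> card \<sigma>'" using smin a(1) unfolding B'_def by blast
          have "\<sigma>' \<noteq> \<sigma>" using a(1) unfolding B'_def by blast
          moreover have "\<sigma>' = \<sigma>" using card_seteq[OF fs ss cc] .
          ultimately show False by blast
        qed
      qed
      have IH: "elementary_collapse\<^sup>*\<^sup>* K (K - (B' \<union> insert y ` B'))"
        using remove.IH[OF s] B'A up' unfolding B'_def by blast
      let ?K' = "K - (B' \<union> insert y ` B')"
      have step: "elementary_collapse ?K' (K - (B \<union> insert y ` B))"
        unfolding elementary_collapse_def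
      proof (intro exI conjI)
        show "\<sigma> \<in> ?K'"
        proof -
          have "\<sigma> \<notin> B'" by (simp add: B'_def)
          moreover have "\<sigma> \<notin> insert y ` B'" using sK(3) by auto
          ultimately show ?thesis using sK by auto
        qed
        show "insert y \<sigma> \<in> ?K'"
        proof -
          have "insert y \<sigma> \<notin> B'" using B'A by (auto simp: A_def)
          moreover have "insert y \<sigma> \<notin> insert y ` B'"
          proof
            assume "insert y \<sigma> \<in> insert y ` B'"
            then obtain t where t: "t \<in> B'" "insert y \<sigma> = insert y t" by auto
            have "y \<notin> t" using t(1) B'A by (auto simp: A_def)
            then have "t = \<sigma>" using t(2) sK(3)
              by (metis Diff_insert_absorb)
            then show False using t(1) by (simp add: B'_def)
          qed
          ultimately show ?thesis using h1[OF sK] by auto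
        qed
        show "\<sigma> \<subset> insert y \<sigma>" using sK(3) by auto
        show "card (insert y \<sigma>) = card \<sigma> + 1" using sK(3) fs by simp
        show "\<forall>\<rho>\<in>?K'. \<sigma> \<subset> \<rho> \<longrightarrow> \<rho> = insert y \<sigma>"
        proof (intro ballI impI)
          fix \<rho> assume r: "\<rho> \<in> ?K'" "\<sigma> \<subset> \<rho>"
          have rK: "\<rho> \<in> K" "x \<in> \<rho>" using r sK by auto
          show "\<rho> = insert y \<sigma>"
          proof (cases "y \<in> \<rho>")
            case False
            then have "\<rho> \<in> A" using rK by (simp add: A_def)
            then have "\<rho> \<in> B" using up s r(2) by blast
            then have "\<rho> \<in> B'" using r(2) by (auto simp: B'_def)
            then show ?thesis using r(1) by auto
          next
            case True
            have rA: "\<rho> - {y} \<in> A" using h2[OF rK True] rK xy by (simp add: A_def)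
            have "\<sigma> \<subseteq> \<rho> - {y}" using r(2) sK(3) by auto
            then have rB: "\<rho> - {y} \<in> B" using up s rA by blast
            show ?thesis
            proof (rule ccontr)
              assume ne: "\<rho> \<noteq> insert y \<sigma>"
              have "\<rho> - {y} \<noteq> \<sigma>" using ne True by auto
              then have "\<rho> - {y} \<in> B'" using rB by (simp add: B'_def)
              then have "insert y (\<rho> - {y}) \<in> insert y ` B'" by blast
              then have "\<rho> \<in> insert y ` B'" using True by (simp add: insert_absorb)
              then show False using r(1) by auto
            qed
          qed
        qed
        show "K - (B \<union> insert y ` B) = ?K' - {\<sigma>, insert y \<sigma>}"
          using s by (auto simp: B'_def)
      qed
      show "elementary_collapse\<^sup>*\<^sup>* K (K - (B \<union> insert y ` B))"
        using IH step by (rule rtranclp.rtrancl_into_rtrancl)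
    qed
  qed
  have "elementary_collapse\<^sup>*\<^sup>* K (K - (A \<union> insert y ` A))"
    using main[OF finA] by (auto simp: A_def)
  moreover have "K - (A \<union> insert y ` A) = {\<sigma>\<in>K. x\<notin>\<sigma>}"
  proof (intro equalityI subsetI)
    fix \<rho> assume r: "\<rho> \<in> K - (A \<union> insert y ` A)"
    show "\<rho> \<in> {\<sigma>\<in>K. x\<notin>\<sigma>}"
    proof (rule ccontr)
      assume "\<rho> \<notin> {\<sigma>\<in>K. x\<notin>\<sigma>}"
      then have rx: "x \<in> \<rho>" using r by auto
      show False
      proof (cases "y \<in> \<rho>")
        case False then show False using r rx by (auto simp: A_def)
      next
        case True
        have "\<rho> - {y} \<in> A" using h2[of \<rho>] r rx True xy by (auto simp: A_def)
        then have "insert y (\<rho> - {y}) \<in> insert y ` A" by blast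
        then show False using r True by (simp add: insert_absorb)
      qed
    qed
  next
    fix \<rho> assume "\<rho> \<in> {\<sigma>\<in>K. x\<notin>\<sigma>}"
    then show "\<rho> \<in> K - (A \<union> insert y ` A)" by (auto simp: A_def)
  qed
  ultimately show ?thesis by simp
qed


lemma oc_remove:
  fixes P :: "'a::order set"
  shows "{\<sigma>\<in>order_complex P. x\<notin>\<sigma>} = order_complex (P - {x})"
  unfolding order_complex_def by auto

lemma oc_finite:
  fixes P :: "'a::order set"
  assumes "finite P"
  shows "finite (order_complex P)"
proof -
  have "order_complex P \<subseteq> Pow P" unfolding order_complex_def by auto
  then show ?thesis using assms finite_subset by blast
qed

lemma remove_below:
  fixes P :: "'a::order set"
  assumes fin: "finite P" and x: "x \<in> P" and y: "y \<in> P" "y < x"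
    and cone: "\<forall>z\<in>P. z < x \<longrightarrow> z \<le> y"
  shows "elementary_collapse\<^sup>*\<^sup>* (order_complex P) (order_complex (P - {x}))"
proof -
  have "elementary_collapse\<^sup>*\<^sup>* (order_complex P) {\<sigma>\<in>order_complex P. x\<notin>\<sigma>}"
  proof (rule collapse_cone)
    show "finite (order_complex P)" using oc_finite[OF fin] .
    show "\<forall>\<sigma>\<in>order_complex P. finite \<sigma>" unfolding order_complex_def by auto
    show "x \<noteq> y" using y by auto
  next
    fix \<sigma> assume s: "\<sigma> \<in> order_complex P" "x \<in> \<sigma>" "y \<notin> \<sigma>"
    have ch: "is_chain \<sigma>" "\<sigma> \<subseteq> P" "finite \<sigma>" using s(1) unfolding order_complex_def by auto
    have "\<forall>z\<in>\<sigma>. z \<le> y \<or> y \<le> z"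
    proof
      fix z assume z: "z \<in> \<sigma>"
      have "z \<le> x \<or> x \<le> z" using ch(1) z s(2) unfolding is_chain_def by blast
      then show "z \<le> y \<or> y \<le> z"
      proof
        assume "z \<le> x"
        then have "z < x \<or> z = x" by auto
        then show ?thesis using cone ch(2) z y by auto
      next
        assume "x \<le> z" then show ?thesis using y by auto
      qed
    qed
    then have "is_chain (insert y \<sigma>)" using ch(1) unfolding is_chain_def by auto
    then show "insert y \<sigma> \<in> order_complex P" using ch y unfolding order_complex_def by auto
  next
    fix \<rho> assume r: "\<rho> \<in> order_complex P" "x \<in> \<rho>" "y \<in> \<rho>"
    then show "\<rho> - {y} \<in> order_complex P" using y unfolding order_complex_def is_chain_def by auto
  qed
  then show ?thesis by (simp add: oc_remove)
qed

lemma remove_above: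
  fixes P :: "'a::order set"
  assumes fin: "finite P" and x: "x \<in> P" and y: "y \<in> P" "x < y"
    and cone: "\<forall>z\<in>P. x < z \<longrightarrow> y \<le> z"
  shows "elementary_collapse\<^sup>*\<^sup>* (order_complex P) (order_complex (P - {x}))"
proof -
  have "elementary_collapse\<^sup>*\<^sup>* (order_complex P) {\<sigma>\<in>order_complex P. x\<notin>\<sigma>}"
  proof (rule collapse_cone)
    show "finite (order_complex P)" using oc_finite[OF fin] .
    show "\<forall>\<sigma>\<in>order_complex P. finite \<sigma>" unfolding order_complex_def by auto
    show "x \<noteq> y" using y by auto
  next
    fix \<sigma> assume s: "\<sigma> \<in> order_complex P" "x \<in> \<sigma>" "y \<notin> \<sigma>"
    have ch: "is_chain \<sigma>" "\<sigma> \<subseteq> P" "finite \<sigma>" using s(1) unfolding order_complex_def by auto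
    have "\<forall>z\<in>\<sigma>. z \<le> y \<or> y \<le> z"
    proof
      fix z assume z: "z \<in> \<sigma>"
      have "z \<le> x \<or> x \<le> z" using ch(1) z s(2) unfolding is_chain_def by blast
      then show "z \<le> y \<or> y \<le> z"
      proof
        assume "x \<le> z"
        then have "x < z \<or> z = x" by auto
        then show ?thesis using cone ch(2) z y by auto
      next
        assume "z \<le> x" then show ?thesis using y by auto
      qed
    qed
    then have "is_chain (insert y \<sigma>)" using ch(1) unfolding is_chain_def by auto
    then show "insert y \<sigma> \<in> order_complex P" using ch y unfolding order_complex_def by auto
  next
    fix \<rho> assume r: "\<rho> \<in> order_complex P" "x \<in> \<rho>" "y \<in> \<rho>"
    then show "\<rho> - {y} \<in> order_complex P" using y unfolding order_complex_def is_chain_def by auto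
  qed
  then show ?thesis by (simp add: oc_remove)
qed


lemma crosscut_pair:
  fixes C :: "'a::bounded_lattice set"
  assumes cc: "is_crosscut C" and ab: "a \<le> b"
  obtains c where "c \<in> C" "c \<le> a \<or> a \<le> c" "c \<le> b \<or> b \<le> c"
proof -
  have "is_chain {a, b}" using ab unfolding is_chain_def by auto
  then obtain c where c: "c \<in> C" "is_chain (insert c {a, b})"
    using cc unfolding is_crosscut_def by blast
  then show ?thesis using that unfolding is_chain_def by blast
qed

lemma crosscut_anti:
  fixes C :: "'a::bounded_lattice set"
  assumes cc: "is_crosscut C" and "c \<in> C" "d \<in> C" "c \<le> d"
  shows "c = d"
  using assms unfolding is_crosscut_def is_antichain_def by blast

lemma key_below:
  fixes C :: "'a::{finite,bounded_lattice} set"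
  assumes cc: "is_crosscut C" and w: "\<exists>c\<in>C. c \<le> w" and zw: "z < w"
    and zT: "z \<in> crosscut_part C \<or> \<not>(\<exists>c\<in>C. c \<le> z)"
  shows "z \<le> Sup_fin {c\<in>C. c \<le> w}"
proof -
  define S where "S = {c\<in>C. c \<le> w}"
  have fS: "finite S" by simp
  have cS: "\<And>c. c \<in> S \<Longrightarrow> c \<le> Sup_fin S" using fS by (rule Sup_fin.coboundedI)
  have "z \<le> Sup_fin S"
  proof (cases "\<exists>c\<in>C. c \<le> z")
    case False
    obtain c0 where c0: "c0 \<in> C" "c0 \<le> w" using w by blast
    obtain c where c: "c \<in> C" "c \<le> z \<or> z \<le> c" "c \<le> sup z c0 \<or> sup z c0 \<le> c"
      using crosscut_pair[OF cc, of z "sup z c0"] by auto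
    have zc: "z \<le> c" using c False by auto
    show ?thesis
    proof (cases "c \<le> sup z c0")
      case True
      have "sup z c0 \<le> w" using zw c0 by auto
      then have "c \<le> w" by (rule order_trans[OF True])
      then have "c \<in> S" using c(1) by (simp add: S_def)
      then show ?thesis by (rule order_trans[OF zc cS])
    next
      case False
      then have "c0 \<le> c" using c by auto
      then have "c0 = c" using crosscut_anti[OF cc c0(1) c(1)] by simp
      then have "c \<in> S" using c0 by (auto simp: S_def)
      then show ?thesis by (rule order_trans[OF zc cS])
    qed
  next
    case True
    then obtain c where c: "c \<in> C" "c \<le> z" by blast
    have zT': "z \<in> crosscut_part C" using zT True by blast
    then consider (J) D where "D \<subseteq> C" "D \<noteq> {}" "z = Sup_fin D"
      | (M) D where "D \<subseteq> C" "D \<noteq> {}" "z = Inf_fin D"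
      unfolding crosscut_part_def by blast
    then show ?thesis
    proof cases
      case J
      have "D \<subseteq> S"
      proof
        fix d assume d: "d \<in> D"
        have "d \<le> z" using J d Sup_fin.coboundedI[of D d] by simp
        then show "d \<in> S" using d J zw by (auto simp: S_def)
      qed
      then show ?thesis using J cS by (auto intro!: Sup_fin.boundedI)
    next
      case M
      obtain d where d: "d \<in> D" using M by blast
      have zd: "z \<le> d" using M d Inf_fin.coboundedI[of D d] by simp
      have dC: "d \<in> C" using d M by auto
      have "c \<le> d" using c(2) zd by (rule order_trans)
      then have "c = d" using crosscut_anti[OF cc c(1) dC] by simp
      then have "z = c" using c zd by auto
      then have "c \<in> S" using c zw by (auto simp: S_def)
      then show ?thesis using cS \<open>z = c\<close> by blast
    qed
  qed
  then show ?thesis by (simp add: S_def)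
qed

lemma key_above:
  fixes C :: "'a::{finite,bounded_lattice} set"
  assumes cc: "is_crosscut C" and w: "\<exists>c\<in>C. w \<le> c" and zw: "w < z"
    and zT: "z \<in> crosscut_part C \<or> \<not>(\<exists>c\<in>C. z \<le> c)"
  shows "Inf_fin {c\<in>C. w \<le> c} \<le> z"
proof -
  define S where "S = {c\<in>C. w \<le> c}"
  have fS: "finite S" by simp
  have cS: "\<And>c. c \<in> S \<Longrightarrow> Inf_fin S \<le> c" using fS by (rule Inf_fin.coboundedI)
  have "Inf_fin S \<le> z"
  proof (cases "\<exists>c\<in>C. z \<le> c")
    case False
    obtain c0 where c0: "c0 \<in> C" "w \<le> c0" using w by blast
    obtain c where c: "c \<in> C" "c \<le> inf z c0 \<or> inf z c0 \<le> c" "c \<le> z \<or> z \<le> c"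
      using crosscut_pair[OF cc, of "inf z c0" z] by auto
    have zc: "c \<le> z" using c False by auto
    show ?thesis
    proof (cases "inf z c0 \<le> c")
      case True
      have "w \<le> inf z c0" using zw c0 by auto
      then have "w \<le> c" using True by (rule order_trans)
      then have "c \<in> S" using c(1) by (simp add: S_def)
      then show ?thesis by (rule order_trans[OF cS zc])
    next
      case False
      then have "c \<le> c0" using c by auto
      then have "c = c0" using crosscut_anti[OF cc c(1) c0(1)] by simp
      then have "c \<in> S" using c0 by (auto simp: S_def)
      then show ?thesis by (rule order_trans[OF cS zc])
    qed
  next
    case True
    then obtain c where c: "c \<in> C" "z \<le> c" by blast
    have zT': "z \<in> crosscut_part C" using zT True by blast
    then consider (J) D where "D \<subseteq> C" "D \<noteq> {}" "z = Sup_fin D"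
      | (M) D where "D \<subseteq> C" "D \<noteq> {}" "z = Inf_fin D"
      unfolding crosscut_part_def by blast
    then show ?thesis
    proof cases
      case M
      have "D \<subseteq> S"
      proof
        fix d assume d: "d \<in> D"
        have "z \<le> d" using M d Inf_fin.coboundedI[of D d] by simp
        then show "d \<in> S" using d M zw by (auto simp: S_def)
      qed
      then show ?thesis using M cS by (auto intro!: Inf_fin.boundedI)
    next
      case J
      obtain d where d: "d \<in> D" using J by blast
      have zd: "d \<le> z" using J d Sup_fin.coboundedI[of D d] by simp
      have dC: "d \<in> C" using d J by auto
      have "d \<le> c" using zd c(2) by (rule order_trans)
      then have "d = c" using crosscut_anti[OF cc dC c(1)] by simp
      then have "z = c" using c zd by auto
      then have "c \<in> S" using c zw by (auto simp: S_def)
      then show ?thesis using cS \<open>z = c\<close> by blast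
    qed
  qed
  then show ?thesis by (simp add: S_def)
qed


theorem mainTheorem5:
  fixes C :: "'a::{finite, bounded_lattice} set"
  assumes "is_crosscut C"
  shows "collapses_onto (order_complex (proper_part :: 'a set))
                        (order_complex (crosscut_part C))"
proof -
  note cc = assms
  define L where "L = (proper_part :: 'a set)"
  define T where "T = crosscut_part C"
  define U where "U = {z::'a. \<exists>c\<in>C. c \<le> z}"
  have CL: "C \<subseteq> L" using cc by (simp add: is_crosscut_def L_def)
  have TL: "T \<subseteq> L" by (auto simp: T_def crosscut_part_def L_def)
  have Lmem: "\<And>z. z \<in> L \<longleftrightarrow> z \<noteq> bot \<and> z \<noteq> top" by (auto simp: L_def proper_part_def)
  define X where "X = L \<inter> U - T"
  have ph1: "W \<subseteq> X \<longrightarrow> (\<forall>a\<in>W. \<forall>b\<in>X. b \<le> a \<longrightarrow> b \<in> W) \<longrightarrow>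
      elementary_collapse\<^sup>*\<^sup>* (order_complex L) (order_complex (L - W))" if fW: "finite W" for W
    using fW
  proof (induction W rule: finite_remove_induct)
    case empty show ?case by simp
  next
    case (remove W)
    show ?case
    proof (intro impI)
      assume WX: "W \<subseteq> X" and dc: "\<forall>a\<in>W. \<forall>b\<in>X. b \<le> a \<longrightarrow> b \<in> W"
      obtain w where w: "w \<in> W" and wmax: "\<forall>b\<in>W. w \<le> b \<longrightarrow> w = b"
        using finite_has_maximal[OF remove.hyps(1) remove.hyps(2)] by blast
      have dc': "\<forall>a\<in>W-{w}. \<forall>b\<in>X. b \<le> a \<longrightarrow> b \<in> W-{w}"
      proof (intro ballI impI)
        fix a b assume a: "a \<in> W - {w}" "b \<in> X" "b \<le> a"
        have "b \<in> W" using dc a by blast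
        moreover have "b \<noteq> w"
        proof
          assume "b = w" then have "w = a" using wmax a by auto
          then show False using a by auto
        qed
        ultimately show "b \<in> W - {w}" by auto
      qed
      have IH: "elementary_collapse\<^sup>*\<^sup>* (order_complex L) (order_complex (L - (W - {w})))"
        using remove.IH[OF w] WX dc' by blast
      have wX: "w \<in> X" using w WX by auto
      then have wL: "w \<in> L" "w \<in> U" "w \<notin> T" by (auto simp: X_def)
      define j where "j = Sup_fin {c\<in>C. c \<le> w}"
      obtain c0 where c0: "c0 \<in> C" "c0 \<le> w" using wL(2) by (auto simp: U_def)
      have jw: "j \<le> w" unfolding j_def using c0 by (auto intro!: Sup_fin.boundedI)
      have c0j: "c0 \<le> j" unfolding j_def using c0 by (auto intro: Sup_fin.coboundedI)
      have jT: "j \<in> T"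
      proof -
        have "c0 \<noteq> bot" using c0 CL Lmem by auto
        then have jb: "j \<noteq> bot" using c0j bot_unique by auto
        have "w \<noteq> top" using wL Lmem by auto
        then have jt: "j \<noteq> top" using jw top_unique by auto
        have "{c\<in>C. c \<le> w} \<subseteq> C" "{c\<in>C. c \<le> w} \<noteq> {}" using c0 by auto
        then show ?thesis using jb jt unfolding T_def crosscut_part_def proper_part_def j_def
          by blast
      qed
      have jlt: "j < w" using jw jT wL(3) by (metis order_le_less)
      have jP: "j \<in> L - (W - {w})" using jT TL WX by (auto simp: X_def)
      have cone: "\<forall>z\<in>L - (W - {w}). z < w \<longrightarrow> z \<le> j"
      proof (intro ballI impI)
        fix z assume z: "z \<in> L - (W - {w})" "z < w"
        have zz: "z \<in> T \<or> z \<notin> U"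
        proof (rule ccontr)
          assume "\<not> (z \<in> T \<or> z \<notin> U)" then have "z \<in> X" using z by (auto simp: X_def)
          then have "z \<in> W" using dc w z(2) by auto
          then show False using z by auto
        qed
        have "\<exists>c\<in>C. c \<le> w" using c0 by auto
        then show "z \<le> j" unfolding j_def using key_below[OF cc _ z(2)] zz by (auto simp: T_def U_def)
      qed
      have "elementary_collapse\<^sup>*\<^sup>* (order_complex (L - (W - {w}))) (order_complex (L - (W - {w}) - {w}))"
        by (rule remove_below[OF _ _ jP jlt cone]) (use wL in auto)
      moreover have "L - (W - {w}) - {w} = L - W" using w by auto
      ultimately show "elementary_collapse\<^sup>*\<^sup>* (order_complex L) (order_complex (L - W))"
        using IH by (metis rtranclp_trans)
    qed
  qed
  have st1: "elementary_collapse\<^sup>*\<^sup>* (order_complex L) (order_complex (L - X))"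
    using ph1[of X] by auto
  define Q0 where "Q0 = L - X"
  define V where "V = L - U - T"
  have ph2: "W \<subseteq> V \<longrightarrow> (\<forall>a\<in>W. \<forall>b\<in>V. a \<le> b \<longrightarrow> b \<in> W) \<longrightarrow>
      elementary_collapse\<^sup>*\<^sup>* (order_complex Q0) (order_complex (Q0 - W))" if fW: "finite W" for W
    using fW
  proof (induction W rule: finite_remove_induct)
    case empty show ?case by simp
  next
    case (remove W)
    show ?case
    proof (intro impI)
      assume WV: "W \<subseteq> V" and uc: "\<forall>a\<in>W. \<forall>b\<in>V. a \<le> b \<longrightarrow> b \<in> W"
      obtain w where w: "w \<in> W" and wmin: "\<forall>b\<in>W. b \<le> w \<longrightarrow> w = b"
        using finite_has_minimal[OF remove.hyps(1) remove.hyps(2)] by blast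
      have uc': "\<forall>a\<in>W-{w}. \<forall>b\<in>V. a \<le> b \<longrightarrow> b \<in> W-{w}"
      proof (intro ballI impI)
        fix a b assume a: "a \<in> W - {w}" "b \<in> V" "a \<le> b"
        have "b \<in> W" using uc a by blast
        moreover have "b \<noteq> w"
        proof
          assume "b = w" then have "w = a" using wmin a by auto
          then show False using a by auto
        qed
        ultimately show "b \<in> W - {w}" by auto
      qed
      have IH: "elementary_collapse\<^sup>*\<^sup>* (order_complex Q0) (order_complex (Q0 - (W - {w})))"
        using remove.IH[OF w] WV uc' by blast
      have wV: "w \<in> V" using w WV by auto
      then have wL: "w \<in> L" "w \<notin> U" "w \<notin> T" by (auto simp: V_def)
      define k where "k = Inf_fin {c\<in>C. w \<le> c}"
      have "is_chain {w}" unfolding is_chain_def by auto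
      then obtain c1 where c1: "c1 \<in> C" "is_chain (insert c1 {w})"
        using cc unfolding is_crosscut_def by blast
      have "c1 \<le> w \<or> w \<le> c1" using c1(2) unfolding is_chain_def by auto
      then have c0: "c1 \<in> C" "w \<le> c1" using wL(2) c1(1) by (auto simp: U_def)
      have kw: "w \<le> k" unfolding k_def using c0 by (auto intro!: Inf_fin.boundedI)
      have c0k: "k \<le> c1" unfolding k_def using c0 by (auto intro: Inf_fin.coboundedI)
      have kT: "k \<in> T"
      proof -
        have "c1 \<noteq> top" using c0 CL Lmem by auto
        then have kt: "k \<noteq> top" using c0k top_unique by auto
        have "w \<noteq> bot" using wL Lmem by auto
        then have kb: "k \<noteq> bot" using kw bot_unique by auto
        have "{c\<in>C. w \<le> c} \<subseteq> C" "{c\<in>C. w \<le> c} \<noteq> {}" using c0 by auto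
        then show ?thesis using kb kt unfolding T_def crosscut_part_def proper_part_def k_def
          by blast
      qed
      have klt: "w < k" using kw kT wL(3) by (metis order_le_less)
      have kP: "k \<in> Q0 - (W - {w})" using kT TL WV by (auto simp: X_def Q0_def V_def)
      have cone: "\<forall>z\<in>Q0 - (W - {w}). w < z \<longrightarrow> k \<le> z"
      proof (intro ballI impI)
        fix z assume z: "z \<in> Q0 - (W - {w})" "w < z"
        have zz: "z \<in> T"
        proof (rule ccontr)
          assume nT: "z \<notin> T"
          have zL: "z \<in> L" "z \<notin> X" using z by (auto simp: Q0_def)
          then have "z \<notin> U" using nT by (auto simp: X_def)
          then have "z \<in> V" using zL nT by (auto simp: V_def)
          then have "z \<in> W" using uc w z(2) by auto
          then show False using z by auto
        qed
        have "\<exists>c\<in>C. w \<le> c" using c0 by auto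
        then show "k \<le> z" unfolding k_def using key_above[OF cc _ z(2)] zz by (auto simp: T_def)
      qed
      have "elementary_collapse\<^sup>*\<^sup>* (order_complex (Q0 - (W - {w}))) (order_complex (Q0 - (W - {w}) - {w}))"
        by (rule remove_above[OF _ _ kP klt cone]) (use wL wV in \<open>auto simp: Q0_def X_def V_def\<close>)
      moreover have "Q0 - (W - {w}) - {w} = Q0 - W" using w by auto
      ultimately show "elementary_collapse\<^sup>*\<^sup>* (order_complex Q0) (order_complex (Q0 - W))"
        using IH by (metis rtranclp_trans)
    qed
  qed
  have st2: "elementary_collapse\<^sup>*\<^sup>* (order_complex Q0) (order_complex (Q0 - V))"
    using ph2[of V] by auto
  have "Q0 - V = T" using TL by (auto simp: Q0_def X_def V_def)
  then show ?thesis using st1 st2 unfolding collapses_onto_def Q0_def L_def T_def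
    by (metis rtranclp_trans)
qed

end
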